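(* Suppose $x^\dagger\neq0$ satisfies the source condition $x^\dagger=(A^*A)^\mu\omega$ with $\|\omega\|\le C_s$ and $0<\mu\le1$. Then there is a constant $C$ (depending on $\mu$, $C_s$, $\alpha_{\max}$ and $\|A\|$) such that for all $\alpha\in(0,\alpha_{\max})$ $$\|x_\alpha-x^\dagger\|\le\frac{C}{\|A^*Ax^\dagger\|^{2\mu}}\,\psi_{SL}(\alpha,x^\dagger)^{2\mu}.$$
   Context: Let $X,Y$ be real Hilbert spaces and $A:X\to Y$ a compact linear operator with singular system $(\sigma_i,u_i,v_i)_i$, $\sigma_i>0$; put $\lambda_i=\sigma_i^2$. Let $x^\dagger\in N(A)^\perp$ (minimum-norm solution), $y=Ax^\dagger$, $x_\alpha=(A^*A+\alpha I)^{-1}A^*y$, $\alpha_{\max}>0$ fixed, and $\psi_{SL}(\alpha,x^\dagger):=\Big(\sum_i\frac{\alpha\lambda_i^2}{(\lambda_i+\alpha)^3}|\langle x^\dagger,u_i\rangle|^2\Big)^{1/2}$. *)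

theory Defs
  imports "HOL-Analysis.Analysis"
begin

text \<open>The index set I (finite or countably infinite) is a subset of nat; u and v are
  orthonormal families, sigma_i > 0, A x = sum_i sigma_i <x,u_i> v_i, and
  sigma_i -> 0 (only finitely many sigma_i exceed any epsilon > 0), which expresses
  compactness.\<close>
definition singular_system ::
  "('a::{real_inner,complete_space} \<Rightarrow> 'b::{real_inner,complete_space}) \<Rightarrow> nat set
     \<Rightarrow> (nat \<Rightarrow> real) \<Rightarrow> (nat \<Rightarrow> 'a) \<Rightarrow> (nat \<Rightarrow> 'b) \<Rightarrow> bool" where
  "singular_system A I \<sigma> u v \<longleftrightarrow>
     bounded_linear A \<and>
     (\<forall>i\<in>I. \<sigma> i > 0) \<and>
     (\<forall>i\<in>I. \<forall>j\<in>I. inner (u i) (u j) = (if i = j then 1 else 0)) \<and>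
     (\<forall>i\<in>I. \<forall>j\<in>I. inner (v i) (v j) = (if i = j then 1 else 0)) \<and>
     (\<forall>x. ((\<lambda>i. (\<sigma> i * inner x (u i)) *\<^sub>R v i) has_sum A x) I) \<and>
     (\<forall>\<epsilon>>0. finite {i\<in>I. \<sigma> i \<ge> \<epsilon>})"

definition is_adjoint :: "('a::real_inner \<Rightarrow> 'b::real_inner) \<Rightarrow> ('b \<Rightarrow> 'a) \<Rightarrow> bool" where
  "is_adjoint A B \<longleftrightarrow> (\<forall>x y. inner (A x) y = inner x (B y))"

definition tikhonov :: "('a::real_inner \<Rightarrow> 'b::real_inner) \<Rightarrow> ('b \<Rightarrow> 'a) \<Rightarrow> real \<Rightarrow> 'b \<Rightarrow> 'a" where
  "tikhonov A Aadj \<alpha> y = (THE x. Aadj (A x) + \<alpha> *\<^sub>R x = Aadj y)"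

text \<open>Fractional power (A^*A)^mu w (mu > 0) via the spectral decomposition of A^*A:
  sum_i lambda_i^mu <w,u_i> u_i with lambda_i = sigma_i^2 (kernel part is mapped to 0).\<close>
definition sv_power :: "nat set \<Rightarrow> (nat \<Rightarrow> real) \<Rightarrow> (nat \<Rightarrow> 'a::real_inner) \<Rightarrow> real \<Rightarrow> 'a \<Rightarrow> 'a" where
  "sv_power I \<sigma> u \<mu> w = infsum (\<lambda>i. ((\<sigma> i)\<^sup>2 powr \<mu> * inner w (u i)) *\<^sub>R u i) I"

definition psi_SL :: "nat set \<Rightarrow> (nat \<Rightarrow> real) \<Rightarrow> (nat \<Rightarrow> 'a::real_inner) \<Rightarrow> real \<Rightarrow> 'a \<Rightarrow> real" where
  "psi_SL I \<sigma> u \<alpha> x = sqrt (infsum (\<lambda>i. \<alpha> * ((\<sigma> i)\<^sup>2)\<^sup>2 / ((\<sigma> i)\<^sup>2 + \<alpha>) ^ 3 * (inner x (u i))\<^sup>2) I)"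

end

theory Submission
  imports Defs
begin


definition ON :: "nat set \<Rightarrow> (nat \<Rightarrow> 'a::real_inner) \<Rightarrow> bool" where
  "ON I u \<longleftrightarrow> (\<forall>i\<in>I. \<forall>j\<in>I. inner (u i) (u j) = (if i = j then 1 else 0))"

lemma has_sum_diff':
  fixes f g :: "'a \<Rightarrow> 'b::real_normed_vector"
  assumes "(f has_sum a) A" "(g has_sum b) A"
  shows "((\<lambda>x. f x - g x) has_sum (a - b)) A"
proof -
  have "((\<lambda>x. - g x) has_sum (- b)) A" using assms(2) by (simp add: has_sum_uminus)
  from has_sum_add[OF assms(1) this] show ?thesis by simp
qed

lemma has_sum_single_at:
  fixes c :: "'b::real_normed_vector"
  assumes "j \<in> I"
  shows "((\<lambda>i. if i = j then c else 0) has_sum c) I"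
  by (rule has_sum_finite_neutralI[of "{j}"]) (use assms in auto)

lemma ON_norm_sum:
  assumes "ON I u" "finite G" "G \<subseteq> I"
  shows "(norm (\<Sum>i\<in>G. c i *\<^sub>R u i))\<^sup>2 = (\<Sum>i\<in>G. (c i)\<^sup>2)"
proof -
  have "(norm (\<Sum>i\<in>G. c i *\<^sub>R u i))\<^sup>2 = inner (\<Sum>i\<in>G. c i *\<^sub>R u i) (\<Sum>j\<in>G. c j *\<^sub>R u j)"
    by (simp add: power2_norm_eq_inner)
  also have "\<dots> = (\<Sum>i\<in>G. inner (c i *\<^sub>R u i) (\<Sum>j\<in>G. c j *\<^sub>R u j))"
    by (rule inner_sum_left)
  also have "\<dots> = (\<Sum>i\<in>G. \<Sum>j\<in>G. inner (c i *\<^sub>R u i) (c j *\<^sub>R u j))"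
    by (simp only: inner_sum_right)
  also have "\<dots> = (\<Sum>i\<in>G. \<Sum>j\<in>G. c i * c j * inner (u i) (u j))"
    by (simp add: mult_ac)
  also have "\<dots> = (\<Sum>i\<in>G. \<Sum>j\<in>G. if j = i then c i * c i else 0)"
    using assms unfolding ON_def by (intro sum.cong refl) (auto simp: subset_iff)
  also have "\<dots> = (\<Sum>i\<in>G. (c i)\<^sup>2)"
    using assms(2) by (simp add: power2_eq_square)
  finally show ?thesis .
qed

lemma sq_crit_summable:
  fixes f :: "nat \<Rightarrow> 'b::{real_inner,complete_space}"
  assumes gs: "g summable_on A" and gnn: "\<And>x. x \<in> A \<Longrightarrow> g x \<ge> 0"
    and bd: "\<And>G. finite G \<Longrightarrow> G \<subseteq> A \<Longrightarrow> (norm (sum f G))\<^sup>2 \<le> sum g G"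
  shows "f summable_on A"
proof -
  from gs obtain L where lim: \<open>(sum g \<longlongrightarrow> L) (finite_subsets_at_top A)\<close>
    unfolding has_sum_def summable_on_def by blast
  have \<open>\<exists>P. eventually P (finite_subsets_at_top A) \<and>
              (\<forall>F F'. P F \<and> P F' \<longrightarrow> dist (sum f F) (sum f F') < e)\<close> if \<open>e>0\<close> for e
  proof -
    define d P where \<open>d = e\<^sup>2/8\<close> and \<open>P F \<longleftrightarrow> finite F \<and> F \<subseteq> A \<and> dist (sum g F) L < d\<close> for F
    then have \<open>d > 0\<close>
      using \<open>e > 0\<close> by (simp add: d_def)
    have ev_P: \<open>eventually P (finite_subsets_at_top A)\<close>
      using lim
      by (auto simp add: P_def[abs_def] \<open>0 < d\<close> eventually_conj_iff eventually_finite_subsets_at_top_weakI tendsto_iff)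
    have cl: \<open>dist (sum f F1) (sum f F2) < e\<close> if PF1: \<open>P F1\<close> and PF2: \<open>P F2\<close> for F1 F2
    proof -
      from ev_P
      obtain F' where \<open>finite F'\<close> and \<open>F' \<subseteq> A\<close> and P_sup_F': \<open>finite F \<and> F \<supseteq> F' \<and> F \<subseteq> A \<Longrightarrow> P F\<close> for F
        by atomize_elim (simp add: eventually_finite_subsets_at_top)
      define F where \<open>F = F' \<union> F1 \<union> F2\<close>
      have p1: "finite F1" "F1 \<subseteq> A" using conjunct1[OF PF1[unfolded P_def]] conjunct1[OF conjunct2[OF PF1[unfolded P_def]]] by simp_all
      have p2: "finite F2" "F2 \<subseteq> A" using conjunct1[OF PF2[unfolded P_def]] conjunct1[OF conjunct2[OF PF2[unfolded P_def]]] by simp_all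
      have \<open>finite F\<close> unfolding F_def using p1 p2 \<open>finite F'\<close> by simp
      have \<open>F \<subseteq> A\<close> unfolding F_def using p1 p2 \<open>F' \<subseteq> A\<close> by simp
      have "F' \<subseteq> F" unfolding F_def by (rule subset_trans[OF Un_upper1 Un_upper1])
      have "P F" by (rule P_sup_F') (use \<open>finite F\<close> \<open>F \<subseteq> A\<close> \<open>F' \<subseteq> F\<close> in simp)
      then have dist_F: \<open>dist (sum g F) L < d\<close> unfolding P_def by simp
      have dist_F_subset: \<open>dist (sum f F) (sum f F') < e/2\<close> if F': \<open>F' \<subseteq> F\<close> \<open>P F'\<close> for F'
      proof -
        have fin: "finite F'" using F' \<open>finite F\<close> finite_subset by blast
        have d1: \<open>dist (sum f F) (sum f F') = norm (sum f (F-F'))\<close>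
          unfolding dist_norm using \<open>finite F\<close> F' by (subst sum_diff) auto
        have d2: \<open>(norm (sum f (F-F')))\<^sup>2 \<le> sum g (F - F')\<close>
          using \<open>finite F\<close> \<open>F \<subseteq> A\<close> by (intro bd) auto
        have d3: \<open>sum g (F - F') = sum g F - sum g F'\<close>
          using \<open>finite F\<close> F' by (subst sum_diff) auto
        have d4: \<open>sum g F - sum g F' < 2 * d\<close>
          using dist_F F' unfolding P_def dist_norm real_norm_def by linarith
        have d5: "2 * d = (e/2)\<^sup>2" by (simp add: d_def power_divide)
        have sq: "(dist (sum f F) (sum f F'))\<^sup>2 < (e/2)\<^sup>2"
          unfolding d1 using d2 d3 d4 d5 by linarith
        have e2: "0 \<le> e/2" using \<open>e > 0\<close> by simp
        show ?thesis by (rule power_less_imp_less_base[OF sq e2])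
      qed
      have \<open>dist (sum f F1) (sum f F2) \<le> dist (sum f F) (sum f F1) + dist (sum f F) (sum f F2)\<close>
        by (rule dist_triangle3)
      also have \<open>\<dots> < e/2 + e/2\<close>
      proof (rule add_strict_mono)
        have s1: "F1 \<subseteq> F" unfolding F_def by (rule subset_trans[OF Un_upper2 Un_upper1])
        have s2: "F2 \<subseteq> F" unfolding F_def by (rule Un_upper2)
        show "dist (sum f F) (sum f F1) < e/2" by (rule dist_F_subset[OF s1 PF1])
        show "dist (sum f F) (sum f F2) < e/2" by (rule dist_F_subset[OF s2 PF2])
      qed
      finally show \<open>dist (sum f F1) (sum f F2) < e\<close> by simp
    qed
    show ?thesis apply (rule exI[of _ P]) using ev_P cl by blast
  qed
  then have \<open>cauchy_filter (filtermap (sum f) (finite_subsets_at_top A))\<close>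
    by (simp add: cauchy_filter_metric_filtermap)
  moreover have "complete (UNIV::'b set)"
    by (meson Cauchy_convergent UNIV_I complete_def convergent_def)
  ultimately obtain L' where \<open>(sum f \<longlongrightarrow> L') (finite_subsets_at_top A)\<close>
    using complete_uniform[where S=UNIV] by (force simp add: filterlim_def)
  then show ?thesis
    using summable_on_def has_sum_def by blast
qed

lemma ON_summable:
  fixes u :: "nat \<Rightarrow> 'b::{real_inner,complete_space}"
  assumes "ON I u" "(\<lambda>i. (c i)\<^sup>2) summable_on I"
  shows "(\<lambda>i. c i *\<^sub>R u i) summable_on I"
  by (rule sq_crit_summable[OF assms(2)]) (use ON_norm_sum[OF assms(1)] in auto)

lemma hs_cong:
  assumes "(f has_sum s) A" "\<And>x. x \<in> A \<Longrightarrow> f x = g x"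
  shows "(g has_sum s) A"
  by (rule has_sum_cong[THEN iffD1, OF assms(2) assms(1)])

lemma ON_coeff:
  assumes "ON I u" "((\<lambda>i. c i *\<^sub>R u i) has_sum s) I" "j \<in> I"
  shows "inner s (u j) = c j"
proof -
  have h1: "((\<lambda>i. inner (c i *\<^sub>R u i) (u j)) has_sum inner s (u j)) I"
    by (rule has_sum_bounded_linear[OF bounded_linear_inner_left assms(2)])
  have eq: "(if i = j then c j else 0) = inner (c i *\<^sub>R u i) (u j)" if i: "i \<in> I" for i
  proof -
    have "inner (u i) (u j) = (if i = j then 1 else 0)"
      using assms(1) i assms(3) unfolding ON_def by blast
    then show ?thesis by simp
  qed
  have h2: "((\<lambda>i. inner (c i *\<^sub>R u i) (u j)) has_sum c j) I"
    by (rule hs_cong[OF has_sum_single_at[OF assms(3)] eq])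
  show ?thesis using has_sum_unique[OF h1 h2] .
qed

lemma ON_parseval:
  assumes "ON I u" "((\<lambda>i. c i *\<^sub>R u i) has_sum s) I"
  shows "((\<lambda>i. (c i)\<^sup>2) has_sum (norm s)\<^sup>2) I"
proof -
  have h: "((\<lambda>i. inner s (c i *\<^sub>R u i)) has_sum inner s s) I"
    by (rule has_sum_bounded_linear[OF bounded_linear_inner_right assms(2)])
  have eq: "inner s (c i *\<^sub>R u i) = (c i)\<^sup>2" if "i \<in> I" for i
    using ON_coeff[OF assms that] by (simp add: power2_eq_square)
  have "inner s s = (norm s)\<^sup>2" by (simp add: power2_norm_eq_inner)
  with hs_cong[OF h eq] show ?thesis by simp
qed

lemma ON_bessel:
  fixes w :: "'b::real_inner"
  assumes "ON I u"
  shows "(\<lambda>i. (inner w (u i))\<^sup>2) summable_on I" "infsum (\<lambda>i. (inner w (u i))\<^sup>2) I \<le> (norm w)\<^sup>2"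
proof -
  have fin: "(\<Sum>i\<in>G. (inner w (u i))\<^sup>2) \<le> (norm w)\<^sup>2" if "finite G" "G \<subseteq> I" for G
  proof -
    define p where "p = (\<Sum>i\<in>G. inner w (u i) *\<^sub>R u i)"
    have np: "(norm p)\<^sup>2 = (\<Sum>i\<in>G. (inner w (u i))\<^sup>2)"
      unfolding p_def by (rule ON_norm_sum[OF assms that])
    have wp: "inner w p = (\<Sum>i\<in>G. (inner w (u i))\<^sup>2)"
      unfolding p_def by (simp add: inner_sum_right power2_eq_square)
    have "0 \<le> (norm (w - p))\<^sup>2" by simp
    also have "\<dots> = (norm w)\<^sup>2 - 2 * inner w p + (norm p)\<^sup>2"
      by (simp add: power2_norm_eq_inner inner_diff_left inner_diff_right inner_commute)
    finally show ?thesis using np wp by simp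
  qed
  show s: "(\<lambda>i. (inner w (u i))\<^sup>2) summable_on I"
    by (rule nonneg_bdd_above_summable_on) (use fin in \<open>auto intro!: bdd_aboveI\<close>)
  show "infsum (\<lambda>i. (inner w (u i))\<^sup>2) I \<le> (norm w)\<^sup>2"
    by (rule infsum_le_finite_sums[OF s fin])
qed



lemma powr_sq: "0 < (x::real) \<Longrightarrow> (x powr a)\<^sup>2 = x powr (2*a)"
proof -
  assume x: "0 < x"
  have "(x powr a)\<^sup>2 = (x powr a) powr 2" using x by (simp add: powr_numeral)
  also have "\<dots> = x powr (2*a)" by (simp add: powr_powr mult.commute)
  finally show ?thesis .
qed

lemma R1:
  fixes l \<alpha> \<mu> :: real
  assumes "0 < l" "0 < \<alpha>" "0 < \<mu>" "\<mu> \<le> 1"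
  shows "(\<alpha> / (l + \<alpha>))\<^sup>2 * (l powr \<mu>)\<^sup>2 \<le> \<alpha> powr (2 * \<mu>)"
proof -
  define t where "t = l + \<alpha>"
  have t: "0 < t" "l \<le> t" "\<alpha> \<le> t" using assms by (auto simp: t_def)
  have "\<alpha> powr (2*\<mu>) * \<alpha> powr (2 - 2*\<mu>) = \<alpha> powr 2" by (simp add: powr_add[symmetric])
  then have a2: "\<alpha>\<^sup>2 = \<alpha> powr (2*\<mu>) * \<alpha> powr (2 - 2*\<mu>)" using assms by (simp add: powr_numeral)
  have "t powr (2*\<mu>) * t powr (2 - 2*\<mu>) = t powr 2" by (simp add: powr_add[symmetric])
  then have t2: "t\<^sup>2 = t powr (2*\<mu>) * t powr (2 - 2*\<mu>)" using t by (simp add: powr_numeral)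
  have l2: "(l powr \<mu>)\<^sup>2 = l powr (2*\<mu>)" using assms(1) by (rule powr_sq)
  have m1: "l powr (2*\<mu>) \<le> t powr (2*\<mu>)" using assms t by (intro powr_mono2) auto
  have m2: "\<alpha> powr (2 - 2*\<mu>) \<le> t powr (2 - 2*\<mu>)" using assms t by (intro powr_mono2) auto
  have "\<alpha>\<^sup>2 * l powr (2*\<mu>) = \<alpha> powr (2*\<mu>) * (\<alpha> powr (2 - 2*\<mu>) * l powr (2*\<mu>))"
    unfolding a2 by (simp only: mult.assoc)
  also have "\<dots> \<le> \<alpha> powr (2*\<mu>) * (t powr (2 - 2*\<mu>) * t powr (2*\<mu>))"
    by (intro mult_left_mono mult_mono m1 m2) auto
  also have "\<dots> = \<alpha> powr (2*\<mu>) * t\<^sup>2" unfolding t2 by (simp only: mult.commute)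
  finally have *: "\<alpha>\<^sup>2 * l powr (2*\<mu>) \<le> \<alpha> powr (2*\<mu>) * t\<^sup>2" .
  have "(\<alpha> / (l + \<alpha>))\<^sup>2 * (l powr \<mu>)\<^sup>2 = \<alpha>\<^sup>2 * l powr (2*\<mu>) / t\<^sup>2"
    unfolding l2 t_def by (simp add: power_divide)
  also have "\<dots> \<le> \<alpha> powr (2*\<mu>)" using * t by (simp add: divide_le_eq)
  finally show ?thesis .
qed

lemma R2:
  fixes en c N P M \<alpha> \<mu> :: real
  assumes "0 < \<alpha>" "0 < \<mu>" "0 \<le> c" "0 < N" "0 < M"
    and en: "en \<le> c * \<alpha> powr \<mu>"
    and P: "\<alpha> / M ^ 3 * N\<^sup>2 \<le> P"
  shows "en \<le> c * M powr (3 * \<mu>) / N powr (2 * \<mu>) * sqrt P powr (2 * \<mu>)"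
proof -
  have K: "0 < \<alpha> / M ^ 3 * N\<^sup>2" using assms by simp
  have P0: "0 < P" using K P by linarith
  have "sqrt P powr (2*\<mu>) = (P powr (1/2)) powr (2*\<mu>)" using P0 by (simp add: powr_half_sqrt)
  also have "\<dots> = P powr \<mu>" by (simp add: powr_powr)
  finally have sP: "sqrt P powr (2*\<mu>) = P powr \<mu>" .
  have mono: "(\<alpha> / M ^ 3 * N\<^sup>2) powr \<mu> \<le> P powr \<mu>"
    using K P assms by (intro powr_mono2) auto
  have M3: "(M ^ 3) powr \<mu> = M powr (3*\<mu>)"
  proof -
    have "(M ^ 3) powr \<mu> = (M powr 3) powr \<mu>" using assms by (simp add: powr_numeral)
    also have "\<dots> = M powr (3*\<mu>)" by (simp add: powr_powr)
    finally show ?thesis .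
  qed
  have N2: "(N ^ 2) powr \<mu> = N powr (2*\<mu>)"
  proof -
    have "(N ^ 2) powr \<mu> = (N powr 2) powr \<mu>" using assms by (simp add: powr_numeral)
    also have "\<dots> = N powr (2*\<mu>)" by (simp add: powr_powr)
    finally show ?thesis .
  qed
  have eqK: "(\<alpha> / M ^ 3 * N\<^sup>2) powr \<mu> = \<alpha> powr \<mu> / M powr (3*\<mu>) * N powr (2*\<mu>)"
    using assms by (simp add: powr_mult powr_divide M3 N2)
  have "\<alpha> powr \<mu> / M powr (3*\<mu>) * N powr (2*\<mu>) \<le> sqrt P powr (2*\<mu>)"
    using mono eqK sP by simp
  then have "\<alpha> powr \<mu> \<le> M powr (3*\<mu>) / N powr (2*\<mu>) * sqrt P powr (2*\<mu>)"
    using assms by (simp add: field_simps)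
  then have "c * \<alpha> powr \<mu> \<le> c * (M powr (3*\<mu>) / N powr (2*\<mu>) * sqrt P powr (2*\<mu>))"
    using assms by (intro mult_left_mono) auto
  then show ?thesis using en by (simp add: mult.assoc)
qed


lemma adj_swap:
  assumes "is_adjoint A B"
  shows "inner (B w) z = inner (A z) w"
  using assms unfolding is_adjoint_def by (simp add: inner_commute)

lemma core:
  fixes A :: "'a::{real_inner,complete_space} \<Rightarrow> 'b::{real_inner,complete_space}"
  assumes S: "singular_system A I \<sigma> u v" and adj: "is_adjoint A B"
    and ker: "\<forall>z. A z = 0 \<longrightarrow> inner xd z = 0" and xd0: "xd \<noteq> 0"
    and src: "xd = sv_power I \<sigma> u \<mu> \<omega>" and om: "norm \<omega> \<le> Cs"
    and mu: "0 < \<mu>" "\<mu> \<le> 1" and al: "0 < \<alpha>" "\<alpha> < \<alpha>m"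
  shows "norm (tikhonov A B \<alpha> (A xd) - xd)
     \<le> \<bar>Cs\<bar> * ((onorm A)\<^sup>2 + \<alpha>m) powr (3 * \<mu>) / norm (B (A xd)) powr (2 * \<mu>)
        * psi_SL I \<sigma> u \<alpha> xd powr (2 * \<mu>)"
proof -
  have bl: "bounded_linear A" and spos: "\<And>i. i \<in> I \<Longrightarrow> \<sigma> i > 0"
    and ONu: "ON I u" and ONv: "ON I v"
    and hsA: "\<And>x. ((\<lambda>i. (\<sigma> i * inner x (u i)) *\<^sub>R v i) has_sum A x) I"
    using S unfolding singular_system_def ON_def by blast+
  have F1: "inner (A x) (v j) = \<sigma> j * inner x (u j)" if "j \<in> I" for x j
    by (rule ON_coeff[OF ONv hsA that])
  have Au: "A (u j) = \<sigma> j *\<^sub>R v j" if "j \<in> I" for j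
  proof -
    have "((\<lambda>i. if i = j then \<sigma> j *\<^sub>R v j else 0) has_sum \<sigma> j *\<^sub>R v j) I"
      by (rule has_sum_single_at[OF that])
    moreover have "(if i = j then \<sigma> j *\<^sub>R v j else 0) = (\<sigma> i * inner (u j) (u i)) *\<^sub>R v i" if i: "i \<in> I" for i
    proof -
      have "inner (u j) (u i) = (if j = i then 1 else 0)" using ONu i \<open>j \<in> I\<close> unfolding ON_def by blast
      then show ?thesis by auto
    qed
    ultimately have "((\<lambda>i. (\<sigma> i * inner (u j) (u i)) *\<^sub>R v i) has_sum \<sigma> j *\<^sub>R v j) I"
      by (rule hs_cong)
    with hsA[of "u j"] show ?thesis using has_sum_unique by blast
  qed
  have F2: "((\<lambda>i. (\<sigma> i)\<^sup>2 * inner x (u i) * inner y (u i)) has_sum inner (A x) (A y)) I" for x y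
  proof -
    have "((\<lambda>i. inner ((\<sigma> i * inner x (u i)) *\<^sub>R v i) (A y)) has_sum inner (A x) (A y)) I"
      by (rule has_sum_bounded_linear[OF bounded_linear_inner_left hsA])
    moreover have "inner ((\<sigma> i * inner x (u i)) *\<^sub>R v i) (A y) = (\<sigma> i)\<^sup>2 * inner x (u i) * inner y (u i)" if i: "i \<in> I" for i
    proof -
      have "inner (v i) (A y) = \<sigma> i * inner y (u i)" using F1[OF i, of y] by (simp add: inner_commute)
      then show ?thesis by (simp add: power2_eq_square)
    qed
    ultimately show ?thesis by (rule hs_cong)
  qed
  have nu: "norm (u j) = 1" if "j \<in> I" for j
    using ONu that unfolding ON_def by (simp add: norm_eq_sqrt_inner)
  have nv: "norm (v j) = 1" if "j \<in> I" for j
    using ONv that unfolding ON_def by (simp add: norm_eq_sqrt_inner)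
  define nA where "nA = onorm A"
  have sle: "\<sigma> j \<le> nA" if "j \<in> I" for j
  proof -
    have "norm (A (u j)) \<le> onorm A * norm (u j)" by (rule onorm[OF bl])
    then show ?thesis using Au[OF that] nv[OF that] nu[OF that] spos[OF that] by (simp add: nA_def)
  qed
  define lam where "lam i = (\<sigma> i)\<^sup>2" for i
  define x where "x i = inner xd (u i)" for i
  define c where "c i = lam i powr \<mu> * inner \<omega> (u i)" for i
  have "(\<lambda>i. c i *\<^sub>R u i) summable_on I"
  proof (rule ccontr)
    assume "\<not> ?thesis"
    then have "sv_power I \<sigma> u \<mu> \<omega> = 0"
      unfolding sv_power_def c_def lam_def by (rule infsum_not_exists)
    with src xd0 show False by simp
  qed
  then have hxc: "((\<lambda>i. c i *\<^sub>R u i) has_sum xd) I"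
    using src unfolding sv_power_def c_def lam_def by (simp add: summable_iff_has_sum_infsum)
  have xc: "x i = c i" if "i \<in> I" for i
    unfolding x_def by (rule ON_coeff[OF ONu hxc that])
  have hx: "((\<lambda>i. x i *\<^sub>R u i) has_sum xd) I"
    using hxc by (rule hs_cong) (simp add: xc)
  have x2s: "(\<lambda>i. (x i)\<^sup>2) summable_on I"
    using ON_parseval[OF ONu hx] by (simp add: has_sum_iff)
  define a where "a i = lam i / (lam i + \<alpha>) * x i" for i
  have lampos: "lam i > 0" if "i \<in> I" for i using spos[OF that] by (simp add: lam_def)
  have lamle: "lam i \<le> nA\<^sup>2" if "i \<in> I" for i
    using spos[OF that] sle[OF that] unfolding lam_def by (intro power_mono) auto
  have a2s: "(\<lambda>i. (a i)\<^sup>2) summable_on I"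
  proof (rule summable_on_comparison_test[OF x2s])
    fix i assume i: "i \<in> I"
    have q: "0 \<le> lam i / (lam i + \<alpha>)" "lam i / (lam i + \<alpha>) \<le> 1" using lampos[OF i] al by auto
    have "(a i)\<^sup>2 = (lam i / (lam i + \<alpha>))\<^sup>2 * (x i)\<^sup>2" by (simp only: a_def power_mult_distrib)
    also have "\<dots> \<le> 1 * (x i)\<^sup>2" using q by (intro mult_right_mono) (auto simp: power_le_one)
    finally show "(a i)\<^sup>2 \<le> (x i)\<^sup>2" by simp
  qed simp
  obtain xa where ha: "((\<lambda>i. a i *\<^sub>R u i) has_sum xa) I"
    using ON_summable[OF ONu a2s] unfolding summable_on_def by blast
  have xac: "inner xa (u i) = a i" if "i \<in> I" for i by (rule ON_coeff[OF ONu ha that])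
  define T where "T y = B (A y) + \<alpha> *\<^sub>R y" for y
  have Tinner: "inner (T y) z = inner (A z) (A y) + \<alpha> * inner y z" for y z
    unfolding T_def by (simp add: inner_add_left adj_swap[OF adj])
  have Texist: "T xa = B (A xd)"
  proof -
    have eq: "inner (T xa) z = inner (B (A xd)) z" for z
    proof -
      have h1: "((\<lambda>i. lam i * inner z (u i) * a i) has_sum inner (A z) (A xa)) I"
        using F2[of z xa] by (rule hs_cong) (simp add: xac lam_def)
      have "((\<lambda>i. inner (a i *\<^sub>R u i) z) has_sum inner xa z) I"
        by (rule has_sum_bounded_linear[OF bounded_linear_inner_left ha])
      then have h2: "((\<lambda>i. \<alpha> * (a i * inner z (u i))) has_sum \<alpha> * inner xa z) I"
        by (intro has_sum_cmult_right) (simp add: inner_commute)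
      have h3: "((\<lambda>i. lam i * inner z (u i) * x i) has_sum inner (A z) (A xd)) I"
        using F2[of z xd] unfolding lam_def x_def by simp
      have "((\<lambda>i. lam i * inner z (u i) * a i + \<alpha> * (a i * inner z (u i))) has_sum inner (T xa) z) I"
        unfolding Tinner by (rule has_sum_add[OF h1 h2])
      moreover have "\<And>i. i \<in> I \<Longrightarrow> lam i * inner z (u i) * a i + \<alpha> * (a i * inner z (u i)) = lam i * inner z (u i) * x i"
      proof -
        fix i assume i: "i \<in> I"
        have "lam i + \<alpha> > 0" using lampos[OF i] al by simp
        then have aa: "(lam i + \<alpha>) * a i = lam i * x i" unfolding a_def by simp
        have "lam i * inner z (u i) * a i + \<alpha> * (a i * inner z (u i)) = ((lam i + \<alpha>) * a i) * inner z (u i)"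
          by (simp add: algebra_simps)
        then show "lam i * inner z (u i) * a i + \<alpha> * (a i * inner z (u i)) = lam i * inner z (u i) * x i"
          unfolding aa by simp
      qed
      ultimately have "((\<lambda>i. lam i * inner z (u i) * x i) has_sum inner (T xa) z) I"
        by (rule hs_cong)
      with h3 have "inner (T xa) z = inner (A z) (A xd)" using has_sum_unique by blast
      then show ?thesis by (simp add: adj_swap[OF adj])
    qed
    have "inner (T xa - B (A xd)) (T xa - B (A xd)) = 0"
      by (simp add: inner_diff_left eq)
    then show ?thesis by simp
  qed
  have Tuniq: "y = xa" if "T y = B (A xd)" for y
  proof -
    define d where "d = y - xa"
    have "inner (T y) d - inner (T xa) d = 0" using that Texist by simp
    moreover have "inner (T y) d - inner (T xa) d = inner (A d) (A d) + \<alpha> * inner d d"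
      unfolding Tinner d_def
      by (simp add: linear_diff[OF bounded_linear.linear[OF bl]] inner_diff_left inner_diff_right algebra_simps)
    moreover have "0 \<le> inner (A d) (A d)" by simp
    ultimately have "\<alpha> * inner d d \<le> 0" by linarith
    then have "inner d d \<le> 0" using al by (simp add: mult_le_0_iff)
    then have "inner d d = 0" using inner_ge_zero[of d] by linarith
    then have "d = 0" by simp
    then show ?thesis by (simp add: d_def)
  qed
  have tik: "tikhonov A B \<alpha> (A xd) = xa"
    unfolding tikhonov_def
  proof (rule the_equality)
    show "B (A xa) + \<alpha> *\<^sub>R xa = B (A xd)" using Texist by (simp add: T_def)
    show "\<And>y. B (A y) + \<alpha> *\<^sub>R y = B (A xd) \<Longrightarrow> y = xa" using Tuniq by (simp add: T_def)
  qed
  have he: "((\<lambda>i. (a i - x i) *\<^sub>R u i) has_sum (xa - xd)) I"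
    using has_sum_diff'[OF ha hx] by (simp add: scaleR_left_diff_distrib)
  have he2: "((\<lambda>i. (a i - x i)\<^sup>2) has_sum (norm (xa - xd))\<^sup>2) I"
    by (rule ON_parseval[OF ONu he])
  define w where "w i = inner \<omega> (u i)" for i
  have w2s: "(\<lambda>i. (w i)\<^sup>2) summable_on I" and w2b: "infsum (\<lambda>i. (w i)\<^sup>2) I \<le> (norm \<omega>)\<^sup>2"
    using ON_bessel[OF ONu, of \<omega>] unfolding w_def by auto
  have hw: "((\<lambda>i. \<alpha> powr (2*\<mu>) * (w i)\<^sup>2) has_sum \<alpha> powr (2*\<mu>) * infsum (\<lambda>i. (w i)\<^sup>2) I) I"
    using w2s by (intro has_sum_cmult_right) (simp add: summable_iff_has_sum_infsum)
  have termb: "(a i - x i)\<^sup>2 \<le> \<alpha> powr (2*\<mu>) * (w i)\<^sup>2" if i: "i \<in> I" for i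
  proof -
    have l0: "lam i + \<alpha> > 0" using lampos[OF i] al by simp
    have "a i - x i = - (\<alpha> / (lam i + \<alpha>)) * x i"
      unfolding a_def using l0 by (simp add: field_simps)
    then have "(a i - x i)\<^sup>2 = (\<alpha> / (lam i + \<alpha>))\<^sup>2 * (x i)\<^sup>2"
      by (simp only: power_mult_distrib power2_minus)
    also have "(x i)\<^sup>2 = (lam i powr \<mu>)\<^sup>2 * (w i)\<^sup>2"
      using xc[OF i] by (simp only: c_def w_def power_mult_distrib)
    finally have "(a i - x i)\<^sup>2 = (\<alpha> / (lam i + \<alpha>))\<^sup>2 * (lam i powr \<mu>)\<^sup>2 * (w i)\<^sup>2"
      by (simp only: mult.assoc)
    also have "\<dots> \<le> \<alpha> powr (2*\<mu>) * (w i)\<^sup>2"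
      by (intro mult_right_mono R1 lampos[OF i] al mu) auto
    finally show ?thesis .
  qed
  have "(norm (xa - xd))\<^sup>2 \<le> \<alpha> powr (2*\<mu>) * infsum (\<lambda>i. (w i)\<^sup>2) I"
    by (rule has_sum_mono[OF he2 hw termb])
  also have "\<dots> \<le> \<alpha> powr (2*\<mu>) * (norm \<omega>)\<^sup>2"
    by (intro mult_left_mono w2b) auto
  also have "\<dots> \<le> \<alpha> powr (2*\<mu>) * Cs\<^sup>2"
    using om by (intro mult_left_mono power_mono) auto
  also have "\<dots> = (\<bar>Cs\<bar> * \<alpha> powr \<mu>)\<^sup>2"
    using powr_sq[OF al(1), of \<mu>] by (simp add: power_mult_distrib mult.commute)
  finally have enb: "norm (xa - xd) \<le> \<bar>Cs\<bar> * \<alpha> powr \<mu>"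
    by (rule power2_le_imp_le) simp
  define y where "y = B (A xd)"
  have yc: "inner y (u i) = lam i * x i" if i: "i \<in> I" for i
  proof -
    have "inner y (u i) = inner (A (u i)) (A xd)" unfolding y_def by (rule adj_swap[OF adj])
    also have "\<dots> = \<sigma> i * inner (A xd) (v i)" by (simp add: Au[OF i] inner_commute)
    also have "\<dots> = lam i * x i" by (simp add: F1[OF i] lam_def x_def power2_eq_square)
    finally show ?thesis .
  qed
  have hN: "((\<lambda>i. (lam i)\<^sup>2 * (x i)\<^sup>2) has_sum (norm y)\<^sup>2) I"
  proof -
    have h: "((\<lambda>i. (\<sigma> i)\<^sup>2 * inner y (u i) * inner xd (u i)) has_sum inner (A y) (A xd)) I" by (rule F2)
    have e: "inner (A y) (A xd) = (norm y)\<^sup>2"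
      by (simp add: power2_norm_eq_inner y_def adj_swap[OF adj])
    have eq: "(\<sigma> i)\<^sup>2 * inner y (u i) * inner xd (u i) = (lam i)\<^sup>2 * (x i)\<^sup>2" if "i \<in> I" for i
      using yc[OF that] by (simp add: lam_def x_def power2_eq_square)
    show ?thesis using hs_cong[OF h eq] e by simp
  qed
  have Npos: "norm y > 0"
  proof (rule ccontr)
    assume "\<not> ?thesis"
    then have "y = 0" by simp
    then have "inner (A xd) (A xd) = 0"
      using adj[unfolded is_adjoint_def, rule_format, of xd "A xd"] \<open>y = 0\<close> by (simp add: y_def)
    then have "A xd = 0" by simp
    then have "inner xd xd = 0" using ker by blast
    with xd0 show False by simp
  qed
  define M where "M = nA\<^sup>2 + \<alpha>m"
  have M0: "M > 0"
  proof -
    have "0 \<le> nA\<^sup>2" by simp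
    then show ?thesis using al unfolding M_def by linarith
  qed
  define t where "t i = \<alpha> * (lam i)\<^sup>2 / (lam i + \<alpha>) ^ 3 * (x i)\<^sup>2" for i
  have ts: "t summable_on I"
  proof (rule summable_on_comparison_test[OF x2s])
    fix i assume i: "i \<in> I"
    have l0: "lam i > 0" using lampos[OF i] .
    have ex: "(lam i + \<alpha>) ^ 3 = lam i ^ 3 + 3 * (\<alpha> * (lam i)\<^sup>2) + 3 * lam i * \<alpha>\<^sup>2 + \<alpha> ^ 3"
      by (simp add: power3_eq_cube power2_eq_square algebra_simps)
    have p1: "0 < lam i ^ 3" "0 < 3 * lam i * \<alpha>\<^sup>2" "0 < \<alpha> ^ 3" "0 < \<alpha> * (lam i)\<^sup>2"
      using l0 al by simp_all
    have "\<alpha> * (lam i)\<^sup>2 \<le> (lam i + \<alpha>) ^ 3" unfolding ex using p1 by linarith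
    then have "\<alpha> * (lam i)\<^sup>2 / (lam i + \<alpha>) ^ 3 \<le> 1" using l0 al by (simp add: divide_le_eq)
    moreover have "0 \<le> \<alpha> * (lam i)\<^sup>2 / (lam i + \<alpha>) ^ 3"
      using l0 al by (intro divide_nonneg_pos mult_nonneg_nonneg) auto
    ultimately show "t i \<le> (x i)\<^sup>2" unfolding t_def by (intro mult_left_le_one_le) auto
    show "0 \<le> t i" unfolding t_def using l0 al by simp
  qed
  have psi: "psi_SL I \<sigma> u \<alpha> xd = sqrt (infsum t I)"
    unfolding psi_SL_def t_def lam_def x_def by simp
  have hK: "((\<lambda>i. \<alpha> / M ^ 3 * ((lam i)\<^sup>2 * (x i)\<^sup>2)) has_sum \<alpha> / M ^ 3 * (norm y)\<^sup>2) I"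
    by (rule has_sum_cmult_right[OF hN])
  have Pb: "\<alpha> / M ^ 3 * (norm y)\<^sup>2 \<le> infsum t I"
  proof (rule has_sum_mono[OF hK])
    show "(t has_sum infsum t I) I" using ts by (simp add: summable_iff_has_sum_infsum)
    fix i assume i: "i \<in> I"
    have l0: "lam i > 0" using lampos[OF i] .
    have "lam i + \<alpha> \<le> M" using lamle[OF i] al unfolding M_def by simp
    then have c3: "(lam i + \<alpha>) ^ 3 \<le> M ^ 3" using l0 al by (intro power_mono) auto
    have "\<alpha> / M ^ 3 \<le> \<alpha> / (lam i + \<alpha>) ^ 3"
      using c3 l0 al M0 by (intro divide_left_mono mult_pos_pos zero_less_power) auto
    then have "\<alpha> / M ^ 3 * ((lam i)\<^sup>2 * (x i)\<^sup>2) \<le> \<alpha> / (lam i + \<alpha>) ^ 3 * ((lam i)\<^sup>2 * (x i)\<^sup>2)"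
      by (intro mult_right_mono) auto
    then show "\<alpha> / M ^ 3 * ((lam i)\<^sup>2 * (x i)\<^sup>2) \<le> t i" unfolding t_def by (simp add: algebra_simps)
  qed
  have "norm (xa - xd) \<le> \<bar>Cs\<bar> * M powr (3 * \<mu>) / norm y powr (2 * \<mu>) * sqrt (infsum t I) powr (2 * \<mu>)"
    by (rule R2[OF al(1) mu(1) _ Npos M0 enb Pb]) simp
  then show ?thesis using tik psi unfolding y_def M_def nA_def by simp
qed


theorem mainTheorem5:
  fixes \<mu> C\<^sub>s \<alpha>max normA :: real
  assumes "0 < \<mu>" and "\<mu> \<le> 1" and "0 < \<alpha>max"
  shows "\<exists>C::real. \<forall>(A::'a::{real_inner,complete_space} \<Rightarrow> 'b::{real_inner,complete_space})
            Aadj I \<sigma> u v (xd::'a) \<omega>.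
     singular_system A I \<sigma> u v \<and> is_adjoint A Aadj \<and> onorm A = normA \<and>
     (\<forall>z. A z = 0 \<longrightarrow> inner xd z = 0) \<and> xd \<noteq> 0 \<and>
     xd = sv_power I \<sigma> u \<mu> \<omega> \<and> norm \<omega> \<le> C\<^sub>s
     \<longrightarrow> (\<forall>\<alpha>. 0 < \<alpha> \<and> \<alpha> < \<alpha>max \<longrightarrow>
          norm (tikhonov A Aadj \<alpha> (A xd) - xd)
            \<le> C / norm (Aadj (A xd)) powr (2 * \<mu>) * psi_SL I \<sigma> u \<alpha> xd powr (2 * \<mu>))"
  apply (rule exI[where x="\<bar>C\<^sub>s\<bar> * (normA\<^sup>2 + \<alpha>max) powr (3 * \<mu>)"])
  apply (intro allI impI, elim conjE)
  subgoal for A Aadj I \<sigma> u v xd \<omega> \<alpha>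
    using core[of A I \<sigma> u v Aadj xd \<mu> \<omega> C\<^sub>s \<alpha> \<alpha>max] assms by simp
  done

end
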